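(* Let $\mathcal{Y}$ be a family of metric spaces with uniform asymptotic property C. If $\mathcal{X}$ is a family of metric spaces such that $\mathcal{X}$ is uniformly $R$-decomposable over $\mathcal{Y}$ for every sequence $R\in\mathbb{R}^{\mathbb{N}}$ (with the same $\mathcal{Y}$ for all $R$), then $\mathcal{X}$ has uniform asymptotic property C.
   Context: A family $\mathcal{U}$ of metric subspaces of a metric space $(X,d)$ is $r$-disjoint if $d(x,y)>r$ whenever $x\in U$, $y\in U'$ and $U\neq U'$ are elements of $\mathcal{U}$. For families $\mathcal{X},\mathcal{Y}$ of metric spaces and $R=(R_1,R_2,\dots)\in\mathbb{R}^{\mathbb{N}}$, $\mathcal{X}$ is uniformly $R$-decomposable over $\mathcal{Y}$ (written $\mathcal{X}\xrightarrow{R}\mathcal{Y}$) if there is an integer $k$ such that for each $X\in\mathcal{X}$ there exist subcollections $\mathcal{U}_1,\dots,\mathcal{U}_k\subseteq\mathcal{Y}$, consisting of subspaces of $X$ with the induced metric, such that each $\mathcal{U}_i$ is $R_i$-disjoint and $\bigcup_i\mathcal{U}_i$ covers $X$. A family $\mathcal{B}$ of metric spaces is bounded if there is $D>0$ with $\operatorname{diam}(B)<D$ for all $B\in\mathcal{B}$. A family $\mathcal{X}$ has uniform asymptotic property C if for each $R\in\mathbb{R}^{\mathbb{N}}$ there exists a bounded family $\mathcal{Y}_R$ with $\mathcal{X}\xrightarrow{R}\mathcal{Y}_R$. *)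

theory Defs
  imports "HOL-Analysis.Analysis"
begin

text \<open>Metric spaces are represented as values of type 'a metric (HOL-Analysis,
Abstract_Metric_Spaces) over a common ambient carrier type 'a; a family of
metric spaces is a set of such values.\<close>

text \<open>Diameter of a metric space, valued in the extended reals (so that it is
always defined; it is +infinity for unbounded spaces, -infinity for the empty one).\<close>
definition mdiam :: "'a metric \<Rightarrow> ereal" where
  "mdiam B = (SUP x\<in>mspace B. SUP y\<in>mspace B. ereal (mdist B x y))"

definition r_disjoint :: "'a metric \<Rightarrow> real \<Rightarrow> 'a metric set \<Rightarrow> bool" where
  "r_disjoint X r \<U> \<longleftrightarrow>
     (\<forall>U\<in>\<U>. \<forall>U'\<in>\<U>. U \<noteq> U' \<longrightarrow>
        (\<forall>x\<in>mspace U. \<forall>y\<in>mspace U'. mdist X x y > r))"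

text \<open>Uniform R-decomposability of the family XX over the family YY
(R = (R_1, R_2, ...), the value R 0 is not used).\<close>
definition unif_decomposable :: "'a metric set \<Rightarrow> (nat \<Rightarrow> real) \<Rightarrow> 'a metric set \<Rightarrow> bool" where
  "unif_decomposable XX R YY \<longleftrightarrow>
     (\<exists>k::nat. \<forall>X\<in>XX. \<exists>\<U>::nat \<Rightarrow> 'a metric set.
        (\<forall>i\<in>{1..k}. \<U> i \<subseteq> YY \<and>
                    (\<forall>U\<in>\<U> i. U = submetric X (mspace U)) \<and>
                    r_disjoint X (R i) (\<U> i)) \<and>
        mspace X \<subseteq> (\<Union>i\<in>{1..k}. \<Union>U\<in>\<U> i. mspace U))"

definition bounded_family :: "'a metric set \<Rightarrow> bool" where
  "bounded_family BB \<longleftrightarrow> (\<exists>D>0. \<forall>B\<in>BB. mdiam B < ereal D)"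

definition unif_asymp_property_C :: "'a metric set \<Rightarrow> bool" where
  "unif_asymp_property_C XX \<longleftrightarrow>
     (\<forall>R::nat \<Rightarrow> real. \<exists>YY. bounded_family YY \<and> unif_decomposable XX R YY)"

end

theory Submission
  imports Defs
begin

fun Nseq :: "((nat \<Rightarrow> real) \<Rightarrow> nat) \<Rightarrow> (nat \<Rightarrow> real) \<Rightarrow> nat \<Rightarrow> nat" where
  "Nseq m R 0 = 0"
| "Nseq m R (Suc i) = Nseq m R i + m (\<lambda>j. R (Nseq m R i + j))"

lemma Nseq_mono: "a \<le> b \<Longrightarrow> Nseq m R a \<le> Nseq m R b"
  by (induction b) (auto simp: le_Suc_eq)

lemma Nseq_unique:
  assumes "Nseq m R a < n" "n \<le> Nseq m R (Suc a)"
    "Nseq m R b < n" "n \<le> Nseq m R (Suc b)"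
  shows "a = b"
proof (rule ccontr)
  assume "a \<noteq> b"
  then consider "Suc a \<le> b" | "Suc b \<le> a" by linarith
  then show False
  proof cases
    case 1 then have "Nseq m R (Suc a) \<le> Nseq m R b" by (rule Nseq_mono)
    then show False using assms by linarith
  next
    case 2 then have "Nseq m R (Suc b) \<le> Nseq m R a" by (rule Nseq_mono)
    then show False using assms by linarith
  qed
qed

lemma sub_sub:
  assumes "V = submetric U (mspace V)" "U = submetric X (mspace U)"
  shows "V = submetric X (mspace V)" "mspace V \<subseteq> mspace U" "mdist V = mdist X" "mdist U = mdist X"
proof -
  have ms: "mspace V = mspace V \<inter> mspace U"
    by (metis assms(1) mspace_submetric)
  show "mspace V \<subseteq> mspace U" using ms by blast
  show "V = submetric X (mspace V)"
    by (metis assms inf_commute ms submetric_submetric)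
  show "mdist V = mdist X" by (metis assms mdist_submetric)
  show "mdist U = mdist X" by (metis assms mdist_submetric)
qed

theorem theorem1p5:
  fixes XX YY :: "'a metric set"
  assumes "unif_asymp_property_C YY"
    and "\<forall>R::nat \<Rightarrow> real. unif_decomposable XX R YY"
  shows "unif_asymp_property_C XX"
  unfolding unif_asymp_property_C_def
proof
  fix R :: "nat \<Rightarrow> real"
  have "\<forall>S. \<exists>B m. bounded_family B \<and> (\<forall>Y\<in>YY. \<exists>\<V>::nat \<Rightarrow> 'a metric set.
        (\<forall>i\<in>{1..m}. \<V> i \<subseteq> B \<and> (\<forall>U\<in>\<V> i. U = submetric Y (mspace U)) \<and>
                    r_disjoint Y (S i) (\<V> i)) \<and>
        mspace Y \<subseteq> (\<Union>i\<in>{1..m}. \<Union>U\<in>\<V> i. mspace U))"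
  proof
    fix S :: "nat \<Rightarrow> real"
    obtain B where B: "bounded_family B" "unif_decomposable YY S B"
      using assms(1) unfolding unif_asymp_property_C_def by blast
    from B(2) obtain m where "\<forall>Y\<in>YY. \<exists>\<V>::nat \<Rightarrow> 'a metric set.
        (\<forall>i\<in>{1..m}. \<V> i \<subseteq> B \<and> (\<forall>U\<in>\<V> i. U = submetric Y (mspace U)) \<and>
                    r_disjoint Y (S i) (\<V> i)) \<and>
        mspace Y \<subseteq> (\<Union>i\<in>{1..m}. \<Union>U\<in>\<V> i. mspace U)"
      unfolding unif_decomposable_def by (elim exE) (rule that)
    with B(1) show "\<exists>B m. bounded_family B \<and> (\<forall>Y\<in>YY. \<exists>\<V>::nat \<Rightarrow> 'a metric set.
        (\<forall>i\<in>{1..m}. \<V> i \<subseteq> B \<and> (\<forall>U\<in>\<V> i. U = submetric Y (mspace U)) \<and>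
                    r_disjoint Y (S i) (\<V> i)) \<and>
        mspace Y \<subseteq> (\<Union>i\<in>{1..m}. \<Union>U\<in>\<V> i. mspace U))"
      by (intro exI conjI)
  qed
  then obtain BB m where BBm: "\<And>S. bounded_family (BB S) \<and> (\<forall>Y\<in>YY. \<exists>\<V>::nat \<Rightarrow> 'a metric set.
        (\<forall>i\<in>{1..m S}. \<V> i \<subseteq> BB S \<and> (\<forall>U\<in>\<V> i. U = submetric Y (mspace U)) \<and>
                    r_disjoint Y (S i) (\<V> i)) \<and>
        mspace Y \<subseteq> (\<Union>i\<in>{1..m S}. \<Union>U\<in>\<V> i. mspace U))"
    by metis
  then obtain VV where VV: "\<And>S Y. Y \<in> YY \<Longrightarrow>
        (\<forall>i\<in>{1..m S}. VV S Y i \<subseteq> BB S \<and> (\<forall>U\<in>VV S Y i. U = submetric Y (mspace U)) \<and>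
                    r_disjoint Y (S i) (VV S Y i)) \<and>
        mspace Y \<subseteq> (\<Union>i\<in>{1..m S}. \<Union>U\<in>VV S Y i. mspace U)"
    by metis
  obtain Dfun where Dfun: "\<And>S. Dfun S > 0 \<and> (\<forall>B\<in>BB S. mdiam B < ereal (Dfun S))"
    using BBm unfolding bounded_family_def by metis
  define N where "N = Nseq m R"
  define S where "S = (\<lambda>i j. R (N i + j))"
  have NS: "N (Suc i) = N i + m (S i)" for i by (simp add: N_def S_def)
  define T where "T = (\<lambda>i. Max (insert 0 (R ` {..N i})))"
  have TR: "R n \<le> T i" if "n \<le> N i" for n i
    unfolding T_def using that by (intro Max_ge) auto
  obtain k where k: "\<forall>X\<in>XX. \<exists>\<U>::nat \<Rightarrow> 'a metric set.
        (\<forall>i\<in>{1..k}. \<U> i \<subseteq> YY \<and>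
                    (\<forall>U\<in>\<U> i. U = submetric X (mspace U)) \<and>
                    r_disjoint X (T i) (\<U> i)) \<and>
        mspace X \<subseteq> (\<Union>i\<in>{1..k}. \<Union>U\<in>\<U> i. mspace U)"
    using assms(2)[rule_format, of T] unfolding unif_decomposable_def by (elim exE) (rule that)
  define ZZ where "ZZ = (\<Union>i<k. BB (S i))"
  have bZZ: "bounded_family ZZ"
    unfolding bounded_family_def
  proof (intro exI[of _ "1 + (\<Sum>i<k. Dfun (S i))"] conjI ballI)
    have "0 \<le> (\<Sum>i<k. Dfun (S i))" using Dfun by (simp add: less_imp_le sum_nonneg)
    then show "0 < 1 + (\<Sum>i<k. Dfun (S i))" by linarith
  next
    fix B assume "B \<in> ZZ"
    then obtain i where i: "i < k" "B \<in> BB (S i)" unfolding ZZ_def by blast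
    have "Dfun (S i) \<le> (\<Sum>i<k. Dfun (S i))"
      using i Dfun by (intro member_le_sum) (auto simp: less_imp_le)
    then have le: "ereal (Dfun (S i)) \<le> ereal (1 + (\<Sum>i<k. Dfun (S i)))" by simp
    have lt: "mdiam B < ereal (Dfun (S i))" using Dfun[of "S i"] i(2) by blast
    show "mdiam B < ereal (1 + (\<Sum>i<k. Dfun (S i)))"
      by (rule less_le_trans[OF lt le])
  qed
  have "unif_decomposable XX R ZZ"
    unfolding unif_decomposable_def
  proof (intro exI[of _ "N k"] ballI)
    fix X assume "X \<in> XX"
    then obtain \<U> where U: "\<forall>i\<in>{1..k}. \<U> i \<subseteq> YY \<and>
                    (\<forall>U\<in>\<U> i. U = submetric X (mspace U)) \<and>
                    r_disjoint X (T i) (\<U> i)"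
      and Ucov: "mspace X \<subseteq> (\<Union>i\<in>{1..k}. \<Union>U\<in>\<U> i. mspace U)"
      using bspec[OF k \<open>X \<in> XX\<close>] by (elim exE conjE) (rule that)
    define W where "W = (\<lambda>n. {V. \<exists>i<k. \<exists>j\<in>{1..m (S i)}. n = N i + j \<and>
                               (\<exists>U\<in>\<U> (Suc i). V \<in> VV (S i) U j)})"
    show "\<exists>\<W>. (\<forall>n\<in>{1..N k}. \<W> n \<subseteq> ZZ \<and> (\<forall>V\<in>\<W> n. V = submetric X (mspace V))
              \<and> r_disjoint X (R n) (\<W> n)) \<and>
           mspace X \<subseteq> (\<Union>n\<in>{1..N k}. \<Union>V\<in>\<W> n. mspace V)"
    proof (intro exI[of _ W] conjI ballI)
      fix n assume n: "n \<in> {1..N k}"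
      show "W n \<subseteq> ZZ"
      proof
        fix V assume "V \<in> W n"
        then obtain i j U where ij: "i < k" "j \<in> {1..m (S i)}" "U \<in> \<U> (Suc i)" "V \<in> VV (S i) U j"
          unfolding W_def by blast
        then have "U \<in> YY" using U by auto
        then show "V \<in> ZZ" using VV[OF \<open>U \<in> YY\<close>, of "S i"] ij unfolding ZZ_def by blast
      qed
    next
      fix n V assume "V \<in> W n"
      then obtain i j U where ij: "i < k" "j \<in> {1..m (S i)}" "U \<in> \<U> (Suc i)" "V \<in> VV (S i) U j"
        unfolding W_def by blast
      then have "U \<in> YY" "U = submetric X (mspace U)" using U by auto
      moreover have "V = submetric U (mspace V)" using VV[OF \<open>U \<in> YY\<close>, of "S i"] ij by blast
      ultimately show "V = submetric X (mspace V)" using sub_sub by blast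
    next
      fix n assume n: "n \<in> {1..N k}"
      show "r_disjoint X (R n) (W n)"
        unfolding r_disjoint_def
      proof (intro ballI impI)
        fix V V' x y assume V: "V \<in> W n" and V': "V' \<in> W n" and ne: "V \<noteq> V'"
          and x: "x \<in> mspace V" and y: "y \<in> mspace V'"
        from V obtain i j U where ij: "i < k" "j \<in> {1..m (S i)}" "n = N i + j"
          "U \<in> \<U> (Suc i)" "V \<in> VV (S i) U j"
          unfolding W_def by blast
        from V' obtain i' j' U' where ij': "i' < k" "j' \<in> {1..m (S i')}" "n = N i' + j'"
          "U' \<in> \<U> (Suc i')" "V' \<in> VV (S i') U' j'"
          unfolding W_def by blast
        have "i = i'"
          by (rule Nseq_unique[of m R i n i']) (use ij ij' NS in \<open>auto simp: N_def\<close>)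
        then have "j = j'" using ij ij' by simp
        have UY: "U \<in> YY" "U = submetric X (mspace U)" using U ij by auto
        have UY': "U' \<in> YY" "U' = submetric X (mspace U')" using U ij' by auto
        have VU: "V = submetric U (mspace V)" using VV[OF UY(1), of "S i"] ij by blast
        have VU': "V' = submetric U' (mspace V')" using VV[OF UY'(1), of "S i'"] ij' by blast
        have xU: "x \<in> mspace U" using sub_sub(2)[OF VU UY(2)] x by blast
        have yU': "y \<in> mspace U'" using sub_sub(2)[OF VU' UY'(2)] y by blast
        show "R n < mdist X x y"
        proof (cases "U = U'")
          case True
          have "r_disjoint U (S i j) (VV (S i) U j)" using VV[OF UY(1), of "S i"] ij by blast
          then have "S i j < mdist U x y"
            unfolding r_disjoint_def using ij ij' True \<open>i = i'\<close> \<open>j = j'\<close> ne x y by blast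
          then show ?thesis using sub_sub(4)[OF VU UY(2)] ij by (simp add: S_def)
        next
          case False
          have "r_disjoint X (T (Suc i)) (\<U> (Suc i))" using U ij by auto
          then have "T (Suc i) < mdist X x y"
            unfolding r_disjoint_def using ij ij' False \<open>i = i'\<close> xU yU' by blast
          moreover have "n \<le> N (Suc i)" using ij NS by simp
          ultimately show ?thesis using TR by (meson le_less_trans)
        qed
      qed
    next
      show "mspace X \<subseteq> (\<Union>n\<in>{1..N k}. \<Union>V\<in>W n. mspace V)"
      proof
        fix x assume "x \<in> mspace X"
        then obtain i U where iU: "i \<in> {1..k}" "U \<in> \<U> i" "x \<in> mspace U" using Ucov by blast
        then obtain i0 where i0: "i = Suc i0" "i0 < k" by (cases i) auto
        have UY: "U \<in> YY" using U iU by auto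
        then obtain j V where jV: "j \<in> {1..m (S i0)}" "V \<in> VV (S i0) U j" "x \<in> mspace V"
          using VV[OF UY, of "S i0"] iU by blast
        have "V \<in> W (N i0 + j)" unfolding W_def using i0 jV iU by blast
        moreover have "N i0 + j \<le> N k"
          using jV NS[of i0] Nseq_mono[of "Suc i0" k m R] i0 by (simp add: N_def)
        moreover have "1 \<le> N i0 + j" using jV by simp
        ultimately show "x \<in> (\<Union>n\<in>{1..N k}. \<Union>V\<in>W n. mspace V)" using jV by auto
      qed
    qed
  qed
  then show "\<exists>YY. bounded_family YY \<and> unif_decomposable XX R YY" using bZZ by blast
qed

end
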